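(* Let $\Omega\subseteq\mathbb{R}^N$ be open, $s\in(0,1)$, and let $G_{x,y}$ be as in the context, satisfying $(g_1)$–$(g_4)$ and $\mathcal{B}_f$. Then for every $u\in C_0^\infty(\Omega)$, $$\int_\Omega\int_\Omega G_{x,y}\Big(\frac{|u(x)-u(y)|}{|x-y|^s}\Big)\frac{dx\,dy}{|x-y|^N}<+\infty.$$
   Context: $G:\Omega\times\Omega\times[0,\infty)\to[0,\infty)$ is a Carathéodory function $G_{x,y}(t)=\int_0^t g(x,y,\tau)d\tau$, $g(x,y,t)=a(x,y,t)t$ for $t\neq0$, $g(x,y,0)=0$, with $a\ge0$ satisfying: $(g_1)$ $\lim_{t\to0}a(x,y,t)t=0$, $\lim_{t\to\infty}a(x,y,t)t=\infty$; $(g_2)$ $t\mapsto a(x,y,t)$ continuous on $(0,\infty)$; $(g_3)$ $t\mapsto a(x,y,t)t$ increasing on $(0,\infty)$; $(g_4)$ there are constants $1<g^-\le g^+<\infty$ with $g^-\le a(x,y,t)t^2/G_{x,y}(t)\le g^+$ for all $(x,y)\in\Omega\times\Omega$, $t>0$. $\mathcal{B}_f$: there exist $C_1,C_2>0$ with $C_1\le G_{x,y}(1)\le C_2$ for all $(x,y)\in\Omega\times\Omega$. $C_0^\infty(\Omega)$: functions in $C^\infty(\mathbb{R}^N)$ whose support is compact and contained in $\Omega$. *)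

theory Defs
  imports "HOL-Analysis.Analysis"
begin

text \<open>C^k functions on the whole space R^N (here: a Euclidean space 'a, N = DIM('a)):
  C^0 = continuous; C^(k+1) = differentiable everywhere with all partial derivatives in C^k.\<close>
fun Ck :: "nat \<Rightarrow> ('a::euclidean_space \<Rightarrow> real) set" where
  "Ck 0 = {f. continuous_on UNIV f}"
| "Ck (Suc k) = {f. f differentiable_on UNIV \<and>
      (\<forall>i\<in>Basis. (\<lambda>x. frechet_derivative f (at x) i) \<in> Ck k)}"

definition smooth_fun :: "('a::euclidean_space \<Rightarrow> real) \<Rightarrow> bool" where
  "smooth_fun f \<longleftrightarrow> (\<forall>k. f \<in> Ck k)"

definition tsupp :: "('a::euclidean_space \<Rightarrow> real) \<Rightarrow> 'a set" where
  "tsupp f = closure {x. f x \<noteq> 0}"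

definition C0_inf :: "'a::euclidean_space set \<Rightarrow> ('a \<Rightarrow> real) set" where
  "C0_inf \<Omega> = {u. smooth_fun u \<and> compact (tsupp u) \<and> tsupp u \<subseteq> \<Omega>}"

definition g_of :: "('a \<Rightarrow> 'a \<Rightarrow> real \<Rightarrow> real) \<Rightarrow> 'a \<Rightarrow> 'a \<Rightarrow> real \<Rightarrow> real" where
  "g_of a x y t = (if t = 0 then 0 else a x y t * t)"

definition G_of :: "('a \<Rightarrow> 'a \<Rightarrow> real \<Rightarrow> real) \<Rightarrow> 'a \<Rightarrow> 'a \<Rightarrow> real \<Rightarrow> real" where
  "G_of a x y t = integral {0..t} (g_of a x y)"

end

theory Submission
  imports Defs
begin


lemma gg_cont:
  fixes b :: "real \<Rightarrow> real"
  assumes lim0: "((\<lambda>t. b t * t) \<longlongrightarrow> 0) (at_right 0)"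
  and cont: "continuous_on {0<..} b"
  shows "continuous_on {0..T} (\<lambda>t. if t = 0 then 0 else b t * t)"
proof -
  let ?g = "\<lambda>t::real. if t = 0 then 0 else b t * t"
  have c1: "continuous_on {0<..} ?g"
  proof -
    have "continuous_on {0<..} (\<lambda>t. b t * t)" by (intro continuous_intros cont)
    then show ?thesis by (rule continuous_on_eq) auto
  qed
  show ?thesis
    unfolding continuous_on_eq_continuous_within
  proof
    fix t assume t: "t \<in> {0..T}"
    show "continuous (at t within {0..T}) ?g"
    proof (cases "t = 0")
      case False
      with t have "t \<in> {0<..}" by auto
      then have "isCont ?g t" using c1 continuous_on_eq_continuous_at[of "{0<..}" ?g] by auto
      then show ?thesis using continuous_at_imp_continuous_within by blast
    next
      case True
      have "(?g \<longlongrightarrow> 0) (at_right 0)"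
        using lim0 by (rule tendsto_cong[THEN iffD1, rotated])
           (auto simp: eventually_at_right_field intro!: exI[of _ 1])
      then have "(?g \<longlongrightarrow> 0) (at 0 within ({0..T} - {0}))"
        by (rule tendsto_within_subset) auto
      then have "(?g \<longlongrightarrow> 0) (at 0 within {0..T})"
        by (simp add: at_within_def)
      then show ?thesis using True by (simp add: continuous_within)
    qed
  qed
qed

lemma GG_deriv:
  fixes b :: "real \<Rightarrow> real"
  assumes lim0: "((\<lambda>t. b t * t) \<longlongrightarrow> 0) (at_right 0)"
  and cont: "continuous_on {0<..} b"
  and t: "0 < t"
  shows "((\<lambda>t. integral {0..t} (\<lambda>t. if t = 0 then 0 else b t * t)) has_real_derivative b t * t) (at t)"
proof -
  have "((\<lambda>t. integral {0..t} (\<lambda>t. if t = 0 then 0 else b t * t)) has_real_derivative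
     (if t = 0 then 0 else b t * t)) (at t within {0..t+1})"
    using gg_cont[OF lim0 cont, of "t+1"] t by (intro integral_has_real_derivative) auto
  moreover have "at t within {0..t+1} = at t"
    using t by (intro at_within_interior) auto
  ultimately show ?thesis using t by simp
qed

lemma G_lin_bound:
  fixes b :: "real \<Rightarrow> real"
  defines "GG \<equiv> \<lambda>t. integral {0..t} (\<lambda>t. if t = 0 then 0 else b t * t)"
  assumes nonneg: "\<And>t. 0<t \<Longrightarrow> 0 \<le> b t"
  and lim0: "((\<lambda>t. b t * t) \<longlongrightarrow> 0) (at_right 0)"
  and cont: "continuous_on {0<..} b"
  and g4: "\<And>t. 0<t \<Longrightarrow> gm \<le> b t * t^2 / GG t \<and> b t * t^2 / GG t \<le> gp"
  and gm: "1 < gm" "gm \<le> gp"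
  and G1: "GG 1 \<le> C2"
  and K: "1 \<le> K" "0 \<le> t" "t \<le> K"
  shows "GG t \<le> C2 * K powr gp * t"
proof -
  have der: "(GG has_real_derivative b x * x) (at x)" if "0 < x" for x
    unfolding GG_def using GG_deriv[OF lim0 cont that] .
  have pos: "GG x > 0" if "0 < x" for x
  proof (rule ccontr)
    assume "\<not> GG x > 0"
    then have "b x * x^2 / GG x \<le> 0"
      using nonneg[OF that] by (intro divide_nonneg_nonpos) auto
    with g4[OF that] gm show False by linarith
  qed
  have lo: "gm * GG x \<le> b x * x^2" if "0 < x" for x
    using g4[OF that] pos[OF that] by (simp add: pos_le_divide_eq)
  have hi: "b x * x^2 \<le> gp * GG x" if "0 < x" for x
    using g4[OF that] pos[OF that] by (simp add: pos_divide_le_eq)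
  have powr_split: "x powr (-p) = x * x powr (-p-1)" if "0 < x" for x p :: real
  proof -
    have "x powr (-p-1) = x powr (-p) / x powr 1" by (rule powr_diff)
    then have "x powr (-p-1) = x powr (-p) / x" using that by simp
    then show ?thesis using that by simp
  qed
  have C2pos: "0 < C2" using pos[of 1] G1 by simp
  have G0: "GG 0 = 0" unfolding GG_def by simp
  show ?thesis
  proof (cases "t = 0")
    case True then show ?thesis using G0 by simp
  next
    case False
    with K have t0: "0 < t" by simp
    show ?thesis
    proof (cases "t \<le> 1")
      case True
      have "GG t * t powr (-gm) \<le> GG 1 * 1 powr (-gm)"
      proof (rule DERIV_nonneg_imp_nondecreasing[OF True])
        fix x assume x: "t \<le> x" "x \<le> 1"
        with t0 have x0: "0 < x" by simp
        have d: "((\<lambda>x. GG x * x powr (-gm)) has_real_derivative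
            (b x * x) * x powr (-gm) + ((-gm) * x powr (-gm - 1)) * GG x) (at x)"
          by (rule DERIV_mult[OF der[OF x0] has_real_derivative_powr[OF x0]])
        define P where "P = x powr (-gm-1)"
        have e: "x powr (-gm) = x * P" unfolding P_def by (rule powr_split[OF x0])
        have "(b x * x) * x powr (-gm) + ((-gm) * x powr (-gm - 1)) * GG x
            = x powr (-gm-1) * (b x * x^2 - gm * GG x)"
          unfolding e P_def[symmetric] by (simp add: algebra_simps power2_eq_square)
        also have "\<dots> \<ge> 0" using lo[OF x0] by simp
        finally show "\<exists>y. ((\<lambda>x. GG x * x powr (-gm)) has_real_derivative y) (at x) \<and> 0 \<le> y"
          using d by blast
      qed
      then have "GG t * t powr (-gm) \<le> C2" using G1 by simp
      moreover have "GG t * t powr (-gm) = GG t / t powr gm" by (simp add: powr_minus divide_inverse)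
      ultimately have "GG t / t powr gm \<le> C2" by simp
      then have "GG t \<le> C2 * t powr gm"
        using t0 by (simp add: pos_divide_le_eq)
      also have "\<dots> \<le> C2 * t" 
        using powr_mono'[of 1 gm t] gm True t0 C2pos by (intro mult_left_mono) auto
      also have "\<dots> \<le> C2 * K powr gp * t"
        using ge_one_powr_ge_zero[of K gp] K gm C2pos t0 by (intro mult_right_mono) auto
      finally show ?thesis .
    next
      case False
      then have t1: "1 \<le> t" by simp
      have "GG 1 * 1 powr (-gp) \<ge> GG t * t powr (-gp)"
      proof (rule DERIV_nonpos_imp_nonincreasing[OF t1])
        fix x assume x: "1 \<le> x" "x \<le> t"
        then have x0: "0 < x" by simp
        have d: "((\<lambda>x. GG x * x powr (-gp)) has_real_derivative
            (b x * x) * x powr (-gp) + ((-gp) * x powr (-gp - 1)) * GG x) (at x)"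
          by (rule DERIV_mult[OF der[OF x0] has_real_derivative_powr[OF x0]])
        define P where "P = x powr (-gp-1)"
        have e: "x powr (-gp) = x * P" unfolding P_def by (rule powr_split[OF x0])
        have "(b x * x) * x powr (-gp) + ((-gp) * x powr (-gp - 1)) * GG x
            = x powr (-gp-1) * (b x * x^2 - gp * GG x)"
          unfolding e P_def[symmetric] by (simp add: algebra_simps power2_eq_square)
        also have "\<dots> \<le> 0" using hi[OF x0] by (simp add: mult_nonneg_nonpos)
        finally show "\<exists>y. ((\<lambda>x. GG x * x powr (-gp)) has_real_derivative y) (at x) \<and> y \<le> 0"
          using d by blast
      qed
      then have "GG t * t powr (-gp) \<le> C2" using G1 by simp
      moreover have "GG t * t powr (-gp) = GG t / t powr gp" by (simp add: powr_minus divide_inverse)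
      ultimately have "GG t / t powr gp \<le> C2" by simp
      then have "GG t \<le> C2 * t powr gp"
        using t0 by (simp add: pos_divide_le_eq)
      also have "\<dots> \<le> C2 * K powr gp"
        using powr_mono2[of gp t K] K gm t0 C2pos by (intro mult_left_mono) auto
      also have "\<dots> \<le> C2 * K powr gp * t"
        using mult_left_mono[of 1 t "C2 * K powr gp"] t1 C2pos by simp
      finally show ?thesis .
    qed
  qed
qed



lemma C0_basic:
  assumes u: "u \<in> C0_inf \<Omega>"
  shows "continuous_on UNIV u" "compact (tsupp u)" "tsupp u \<subseteq> \<Omega>"
    "\<And>x. x \<notin> tsupp u \<Longrightarrow> u x = 0"
proof -
  have sm: "smooth_fun u" and c: "compact (tsupp u)" and sub: "tsupp u \<subseteq> \<Omega>"
    using u by (simp_all add: C0_inf_def)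
  have "u \<in> Ck 0" using sm unfolding smooth_fun_def by blast
  then show "continuous_on UNIV u" by simp
  show "compact (tsupp u)" "tsupp u \<subseteq> \<Omega>" by fact+
  show "\<And>x. x \<notin> tsupp u \<Longrightarrow> u x = 0"
    unfolding tsupp_def using closure_subset[of "{x. u x \<noteq> 0}"] by auto
qed

lemma C0_bounded:
  assumes u: "u \<in> C0_inf \<Omega>"
  obtains M where "0 \<le> M" "\<And>x. \<bar>u x\<bar> \<le> M"
proof -
  note b = C0_basic[OF u]
  have "compact (u ` tsupp u)"
    by (rule compact_continuous_image[OF continuous_on_subset[OF b(1) subset_UNIV] b(2)])
  then have "bounded (u ` tsupp u)" by (rule compact_imp_bounded)
  then obtain B where B0: "\<forall>y\<in>u ` tsupp u. norm y \<le> B" unfolding bounded_iff by (elim exE)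
  then have B: "\<And>y. y \<in> u ` tsupp u \<Longrightarrow> norm y \<le> B" by (simp only: Ball_def)
  show ?thesis
  proof (rule that[of "max B 0"])
    fix x show "\<bar>u x\<bar> \<le> max B 0"
      using B[of "u x"] b(4)[of x] by (cases "x \<in> tsupp u") auto
  qed simp
qed

lemma C0_lipschitz:
  fixes u :: "'a::euclidean_space \<Rightarrow> real"
  assumes u: "u \<in> C0_inf \<Omega>"
  obtains L where "0 \<le> L" "\<And>x y. \<bar>u x - u y\<bar> \<le> L * norm (x - y)"
proof -
  note b = C0_basic[OF u]
  let ?S = "tsupp u"
  have "u \<in> Ck (Suc 0)" using u unfolding C0_inf_def smooth_fun_def by blast
  then have diff: "u differentiable_on UNIV"
    and pc: "\<And>i. i \<in> Basis \<Longrightarrow> continuous_on UNIV (\<lambda>x. frechet_derivative u (at x) i)"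
    by (auto simp del: Ck.simps simp: Ck.simps(2)) (auto simp: Ck.simps(1))
  define D where "D x = frechet_derivative u (at x)" for x
  have hasD: "(u has_derivative D x) (at x)" for x
    unfolding D_def using diff by (simp add: differentiable_on_def frechet_derivative_works)
  have lin: "linear (D x)" for x using hasD has_derivative_linear by blast
  have D0: "D x = (\<lambda>h. 0)" if "x \<notin> ?S" for x
  proof -
    have "((\<lambda>_. 0::real) has_derivative (\<lambda>h. 0)) (at x)" by simp
    then have "(u has_derivative (\<lambda>h. 0)) (at x)"
      by (rule has_derivative_transform_within_open[where s="- ?S"])
         (use that b(2) b(4) compact_imp_closed in \<open>auto simp: open_Compl\<close>)
    then show ?thesis unfolding D_def using frechet_derivative_at by metis
  qed
  define h where "h x = (\<Sum>i\<in>Basis. \<bar>D x i\<bar>)" for x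
  have hc: "continuous_on UNIV h" unfolding h_def D_def
    by (intro continuous_intros pc)
  have "compact (h ` ?S)"
    by (rule compact_continuous_image[OF continuous_on_subset[OF hc subset_UNIV] b(2)])
  then have "bounded (h ` ?S)" by (rule compact_imp_bounded)
  then obtain B where B0: "\<forall>y\<in>h ` ?S. norm y \<le> B" unfolding bounded_iff by (elim exE)
  then have B: "\<And>y. y \<in> h ` ?S \<Longrightarrow> norm y \<le> B" by (simp only: Ball_def)
  have hB: "h x \<le> max B 0" for x
  proof (cases "x \<in> ?S")
    case True then show ?thesis using B[of "h x"] by auto
  next
    case False then show ?thesis using D0[OF False] by (simp add: h_def)
  qed
  have on: "onorm (D x) \<le> max B 0" for x
  proof (rule onorm_le)
    fix v
    have "D x v = (\<Sum>i\<in>Basis. (v \<bullet> i) * D x i)"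
    proof -
      have "D x v = D x (\<Sum>i\<in>Basis. (v \<bullet> i) *\<^sub>R i)" by (simp add: euclidean_representation)
      also have "\<dots> = (\<Sum>i\<in>Basis. (v \<bullet> i) * D x i)"
        using lin[of x] by (simp add: linear_sum linear_scale)
      finally show ?thesis .
    qed
    then have "norm (D x v) \<le> (\<Sum>i\<in>Basis. \<bar>v \<bullet> i\<bar> * \<bar>D x i\<bar>)"
      by (auto intro: order.trans[OF sum_abs] simp: abs_mult)
    also have "\<dots> \<le> (\<Sum>i\<in>Basis. norm v * \<bar>D x i\<bar>)"
      by (intro sum_mono mult_right_mono) (auto simp: Basis_le_norm)
    also have "\<dots> = norm v * h x" by (simp add: h_def sum_distrib_left)
    also have "\<dots> \<le> max B 0 * norm v" using hB[of x] by (simp add: mult_left_mono mult.commute)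
    finally show "norm (D x v) \<le> max B 0 * norm v" .
  qed
  show ?thesis
  proof (rule that[of "max B 0"])
    fix x y
    show "\<bar>u x - u y\<bar> \<le> max B 0 * norm (x - y)"
      using differentiable_bound[of UNIV u D "max B 0" x y] hasD on by simp
  qed simp
qed



lemma dyadic_sum_integral:
  fixes c \<rho> :: "nat \<Rightarrow> real"
  assumes c: "\<And>j. 0 \<le> c j" and r: "\<And>j. 0 \<le> \<rho> j"
    and sm: "summable (\<lambda>j. c j * (unit_ball_vol (DIM('a)) * \<rho> j ^ DIM('a)))"
  shows "(\<integral>\<^sup>+z. (\<Sum>j. ennreal (c j) * indicator (cball (0::'a::euclidean_space) (\<rho> j)) z) \<partial>lborel) < \<infinity>"
proof -
  have "(\<integral>\<^sup>+z. (\<Sum>j. ennreal (c j) * indicator (cball (0::'a) (\<rho> j)) z) \<partial>lborel)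
      = (\<Sum>j. \<integral>\<^sup>+z. ennreal (c j) * indicator (cball (0::'a) (\<rho> j)) z \<partial>lborel)"
    by (rule nn_integral_suminf) (auto intro!: borel_measurable_times_ennreal borel_measurable_indicator borel_closed)
  also have "\<dots> = (\<Sum>j. ennreal (c j) * emeasure lborel (cball (0::'a) (\<rho> j)))"
    by (subst nn_integral_cmult_indicator) auto
  also have "\<dots> = (\<Sum>j. ennreal (c j * (unit_ball_vol (DIM('a)) * \<rho> j ^ DIM('a))))"
    using c r by (simp add: emeasure_cball ennreal_mult)
  also have "\<dots> = ennreal (\<Sum>j. c j * (unit_ball_vol (DIM('a)) * \<rho> j ^ DIM('a)))"
    using c r sm by (intro suminf_ennreal2) auto
  finally show ?thesis by simp
qed

lemma ennreal_term_le_suminf: "(f::nat\<Rightarrow>ennreal) j \<le> suminf f"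
proof -
  have "sum f {j} \<le> suminf f" by (rule sum_le_suminf) (auto intro: summableI)
  then show ?thesis by simp
qed

lemma half_pow_powr: "(inverse (2 ^ n::real)) powr (-p) = (2 powr p) ^ n"
proof -
  have b: "(2::real) ^ n = 2 powr (real n)" by (simp add: powr_realpow)
  have "(inverse (2^n::real)) powr (-p) = (2^n) powr p" by (simp add: powr_minus inverse_powr)
  also have "\<dots> = 2 powr (real n * p)" by (simp only: b powr_powr)
  also have "\<dots> = (2 powr p) ^ n" by (simp add: powr_power)
  finally show ?thesis .
qed

lemma near_kernel_finite:
  fixes p :: real
  assumes p: "0 \<le> p" "p < DIM('a)"
  shows "(\<integral>\<^sup>+z. ennreal (if 0 < norm z \<and> norm z \<le> 1 then norm (z::'a::euclidean_space) powr (-p) else 0) \<partial>lborel) < \<infinity>"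
proof -
  define V where "V = unit_ball_vol (DIM('a))"
  define c where "c j = (2 powr p) ^ Suc j" for j :: nat
  define \<rho> where "\<rho> j = inverse ((2::real) ^ j)" for j :: nat
  have pt: "ennreal (if 0 < norm z \<and> norm z \<le> 1 then norm (z::'a) powr (-p) else 0)
     \<le> (\<Sum>j. ennreal (c j) * indicator (cball (0::'a) (\<rho> j)) z)" for z
  proof (cases "0 < norm z \<and> norm z \<le> 1")
    case True
    then have z0: "0 < norm z" and z1: "norm z \<le> 1" by auto
    have ex: "\<exists>n. inverse ((2::real) ^ n) < norm z"
      using real_arch_pow_inv[OF z0, of "1/2"] by (simp add: power_one_over inverse_eq_divide)
    define n where "n = (LEAST n. inverse ((2::real) ^ n) < norm z)"
    have n1: "inverse ((2::real) ^ n) < norm z" unfolding n_def by (rule LeastI_ex[OF ex])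
    have "n \<noteq> 0" using n1 z1 by (cases n) auto
    then obtain j where nj: "n = Suc j" by (cases n) auto
    have n2: "\<not> inverse ((2::real) ^ j) < norm z"
      using not_less_Least[of j "\<lambda>n. inverse ((2::real) ^ n) < norm z"] nj n_def by simp
    have "norm z powr (-p) \<le> (inverse ((2::real) ^ Suc j)) powr (-p)"
      using n1 nj p by (intro powr_mono2') auto
    also have "\<dots> = c j"
      unfolding c_def by (rule half_pow_powr)
    finally have le: "norm z powr (-p) \<le> c j" .
    have "ennreal (norm z powr (-p)) \<le> ennreal (c j) * indicator (cball (0::'a) (\<rho> j)) z"
      using le n2 by (auto simp: \<rho>_def indicator_def ennreal_leI)
    also have "\<dots> \<le> (\<Sum>j. ennreal (c j) * indicator (cball (0::'a) (\<rho> j)) z)"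
      by (rule ennreal_term_le_suminf)
    finally show ?thesis using True by simp
  qed auto
  have "(\<integral>\<^sup>+z. ennreal (if 0 < norm z \<and> norm z \<le> 1 then norm (z::'a) powr (-p) else 0) \<partial>lborel)
     \<le> (\<integral>\<^sup>+z. (\<Sum>j. ennreal (c j) * indicator (cball (0::'a) (\<rho> j)) z) \<partial>lborel)"
    by (intro nn_integral_mono pt)
  also have "\<dots> < \<infinity>"
  proof (rule dyadic_sum_integral)
    show "0 \<le> c j" "0 \<le> \<rho> j" for j by (auto simp: c_def \<rho>_def)
    define r where "r = 2 powr p / 2 ^ DIM('a)"
    have eq: "c j * (V * \<rho> j ^ DIM('a)) = (2 powr p * V) * r ^ j" for j
    proof -
      have "\<rho> j ^ DIM('a) = inverse ((2 ^ DIM('a)) ^ j)"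
        by (simp add: \<rho>_def power_inverse power_mult[symmetric] mult.commute)
      then show ?thesis
        by (simp add: c_def r_def power_divide field_simps)
    qed
    have lt: "r < 1"
    proof -
      have "2 powr p < 2 powr DIM('a)" using p by (intro powr_less_mono) auto
      then show ?thesis by (simp add: r_def powr_realpow)
    qed
    show "summable (\<lambda>j. c j * (unit_ball_vol (DIM('a)) * \<rho> j ^ DIM('a)))"
      unfolding V_def[symmetric] eq
      by (intro summable_mult summable_geometric) (use lt in \<open>auto simp: r_def\<close>)
  qed
  finally show ?thesis .
qed

lemma far_kernel_finite:
  fixes q :: real
  assumes q: "DIM('a) < q"
  shows "(\<integral>\<^sup>+z. ennreal (if 1 < norm z then norm (z::'a::euclidean_space) powr (-q) else 0) \<partial>lborel) < \<infinity>"
proof -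
  define V where "V = unit_ball_vol (DIM('a))"
  define c where "c j = (2 powr (-q)) ^ j" for j :: nat
  define \<rho> where "\<rho> j = (2::real) ^ Suc j" for j :: nat
  have pt: "ennreal (if 1 < norm z then norm (z::'a) powr (-q) else 0)
     \<le> (\<Sum>j. ennreal (c j) * indicator (cball (0::'a) (\<rho> j)) z)" for z
  proof (cases "1 < norm z")
    case True
    have ex: "\<exists>n. norm z \<le> (2::real) ^ n"
      using real_arch_pow[of 2 "norm z"] by (auto intro: less_imp_le)
    define n where "n = (LEAST n. norm z \<le> (2::real) ^ n)"
    have n1: "norm z \<le> (2::real) ^ n" unfolding n_def by (rule LeastI_ex[OF ex])
    have "n \<noteq> 0" using n1 True by (cases n) auto
    then obtain j where nj: "n = Suc j" by (cases n) auto
    have n2: "\<not> norm z \<le> (2::real) ^ j"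
      using not_less_Least[of j "\<lambda>n. norm z \<le> (2::real) ^ n"] nj n_def by simp
    have "norm z powr (-q) \<le> ((2::real) ^ j) powr (-q)"
      using n2 q by (intro powr_mono2') auto
    also have "\<dots> = c j"
    proof -
      have b: "(2::real) ^ j = 2 powr (real j)" by (simp add: powr_realpow)
      have "((2::real) ^ j) powr (-q) = 2 powr (real j * (-q))" by (simp only: b powr_powr)
      also have "\<dots> = c j" unfolding c_def by (simp add: powr_power)
      finally show ?thesis .
    qed
    finally have le: "norm z powr (-q) \<le> c j" .
    have "ennreal (norm z powr (-q)) \<le> ennreal (c j) * indicator (cball (0::'a) (\<rho> j)) z"
      using le n1 nj by (auto simp: \<rho>_def indicator_def ennreal_leI)
    also have "\<dots> \<le> (\<Sum>j. ennreal (c j) * indicator (cball (0::'a) (\<rho> j)) z)"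
      by (rule ennreal_term_le_suminf)
    finally show ?thesis using True by simp
  qed auto
  have "(\<integral>\<^sup>+z. ennreal (if 1 < norm z then norm (z::'a) powr (-q) else 0) \<partial>lborel)
     \<le> (\<integral>\<^sup>+z. (\<Sum>j. ennreal (c j) * indicator (cball (0::'a) (\<rho> j)) z) \<partial>lborel)"
    by (intro nn_integral_mono pt)
  also have "\<dots> < \<infinity>"
  proof (rule dyadic_sum_integral)
    show "0 \<le> c j" "0 \<le> \<rho> j" for j by (auto simp: c_def \<rho>_def)
    define r where "r = 2 powr (-q) * 2 ^ DIM('a)"
    have eq: "c j * (V * \<rho> j ^ DIM('a)) = (V * 2 ^ DIM('a)) * r ^ j" for j
    proof -
      have "\<rho> j ^ DIM('a) = 2 ^ DIM('a) * (2 ^ DIM('a)) ^ j"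
        by (simp add: \<rho>_def power_mult[symmetric] mult.commute power_add)
      then show ?thesis
        by (simp add: c_def r_def power_mult_distrib)
    qed
    have lt: "r < 1"
    proof -
      have "2 powr DIM('a) < 2 powr q" using q by (intro powr_less_mono) auto
      then show ?thesis by (simp add: r_def powr_realpow powr_minus field_simps)
    qed
    show "summable (\<lambda>j. c j * (unit_ball_vol (DIM('a)) * \<rho> j ^ DIM('a)))"
      unfolding V_def[symmetric] eq
      by (intro summable_mult summable_geometric) (use lt in \<open>auto simp: r_def\<close>)
  qed
  finally show ?thesis .
qed



lemma nn_integral_translate:
  fixes K :: "'a::euclidean_space \<Rightarrow> ennreal"
  assumes Km: "K \<in> borel_measurable borel"
  shows "(\<integral>\<^sup>+x. K (x - y) \<partial>lborel) = integral\<^sup>N lborel K"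
proof -
  have d: "distr lborel borel (\<lambda>x. (-y) + x) = (lborel :: 'a measure)"
    using lborel_affine[of 1 "-y"] by (simp add: density_1)
  have "integral\<^sup>N lborel K = integral\<^sup>N (distr lborel borel (\<lambda>x. (-y) + x)) K"
    by (simp only: d)
  also have "\<dots> = (\<integral>\<^sup>+x. K ((-y) + x) \<partial>lborel)"
    using Km by (intro nn_integral_distr) auto
  finally show ?thesis by simp
qed

lemma double_kernel_finite:
  fixes K :: "'a::euclidean_space \<Rightarrow> ennreal" and S :: "'a set"
  assumes Km[measurable]: "K \<in> borel_measurable borel" and Keven: "\<And>z. K (-z) = K z"
    and KI: "integral\<^sup>N lborel K < \<infinity>"
    and S[measurable]: "S \<in> sets borel" and Sfin: "emeasure lborel S < \<infinity>"
  shows "(\<integral>\<^sup>+y. (\<integral>\<^sup>+x. (indicator S x + indicator S y) * K (x - y) \<partial>lborel) \<partial>lborel) < \<infinity>"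
proof -
  define I where "I = integral\<^sup>N lborel K"
  have tr: "(\<integral>\<^sup>+x. K (x - y) \<partial>lborel) = I" for y
    unfolding I_def by (rule nn_integral_translate[OF Km])
  have tr2: "(\<integral>\<^sup>+y. K (x - y) \<partial>lborel) = I" for x
  proof -
    have "(\<lambda>y. K (x - y)) = (\<lambda>y. K (y - x))"
      using Keven by (metis minus_diff_eq)
    then show ?thesis using tr[of x] by simp
  qed
  have pm: "(\<lambda>(y, x). indicator S x * K (x - y)) \<in> borel_measurable (lborel \<Otimes>\<^sub>M lborel)"
    by measurable
  have inner: "(\<integral>\<^sup>+x. (indicator S x + indicator S y) * K (x - y) \<partial>lborel)
      = (\<integral>\<^sup>+x. indicator S x * K (x - y) \<partial>lborel) + indicator S y * I" for y
  proof -
    have "(\<integral>\<^sup>+x. (indicator S x + indicator S y) * K (x - y) \<partial>lborel)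
       = (\<integral>\<^sup>+x. indicator S x * K (x - y) + indicator S y * K (x - y) \<partial>lborel)"
      by (simp add: distrib_right)
    also have "\<dots> = (\<integral>\<^sup>+x. indicator S x * K (x - y) \<partial>lborel) + (\<integral>\<^sup>+x. indicator S y * K (x - y) \<partial>lborel)"
      by (rule nn_integral_add) auto
    also have "(\<integral>\<^sup>+x. indicator S y * K (x - y) \<partial>lborel) = indicator S y * I"
      by (subst nn_integral_cmult) (auto simp: tr)
    finally show ?thesis .
  qed
  have Am: "(\<lambda>y. \<integral>\<^sup>+x. indicator S x * K (x - y) \<partial>lborel) \<in> borel_measurable lborel"
    using pm by measurable
  have "(\<integral>\<^sup>+y. (\<integral>\<^sup>+x. (indicator S x + indicator S y) * K (x - y) \<partial>lborel) \<partial>lborel)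
      = (\<integral>\<^sup>+y. (\<integral>\<^sup>+x. indicator S x * K (x - y) \<partial>lborel) + indicator S y * I \<partial>lborel)"
    by (simp only: inner)
  also have "\<dots> = (\<integral>\<^sup>+y. (\<integral>\<^sup>+x. indicator S x * K (x - y) \<partial>lborel) \<partial>lborel) + (\<integral>\<^sup>+y. indicator S y * I \<partial>lborel)"
    using Am by (intro nn_integral_add) auto
  also have "(\<integral>\<^sup>+y. (\<integral>\<^sup>+x. indicator S x * K (x - y) \<partial>lborel) \<partial>lborel)
      = (\<integral>\<^sup>+x. (\<integral>\<^sup>+y. indicator S x * K (x - y) \<partial>lborel) \<partial>lborel)"
    by (rule lborel_pair.Fubini') measurable
  also have "\<dots> = (\<integral>\<^sup>+x. indicator S x * I \<partial>lborel)"
    by (subst nn_integral_cmult) (auto simp: tr2)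
  also have "(\<integral>\<^sup>+x. indicator S x * I \<partial>lborel) = I * emeasure lborel S"
    by (subst mult.commute) (simp add: nn_integral_cmult_indicator)
  finally have eq: "(\<integral>\<^sup>+y. (\<integral>\<^sup>+x. (indicator S x + indicator S y) * K (x - y) \<partial>lborel) \<partial>lborel)
      = I * emeasure lborel S + I * emeasure lborel S" by simp
  have "I * emeasure lborel S < \<infinity>"
    using KI Sfin unfolding I_def by (simp add: ennreal_mult_less_top)
  then show ?thesis unfolding eq by simp
qed

theorem lemma2p3:
  fixes \<Omega> :: "'a::euclidean_space set"
    and s :: real
    and a :: "'a \<Rightarrow> 'a \<Rightarrow> real \<Rightarrow> real"
    and gm gp C1 C2 :: real
    and u :: "'a \<Rightarrow> real"
  assumes open_\<Omega>: "open \<Omega>"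
    and s: "0 < s" "s < 1"
    and a_nonneg: "\<And>x y t. x \<in> \<Omega> \<Longrightarrow> y \<in> \<Omega> \<Longrightarrow> 0 < t \<Longrightarrow> 0 \<le> a x y t"
    and caratheodory: "\<And>t. 0 \<le> t \<Longrightarrow>
          (\<lambda>(x, y). G_of a x y t) \<in> borel_measurable (lebesgue_on (\<Omega> \<times> \<Omega>))"
    and g1_0: "\<And>x y. x \<in> \<Omega> \<Longrightarrow> y \<in> \<Omega> \<Longrightarrow> ((\<lambda>t. a x y t * t) \<longlongrightarrow> 0) (at_right 0)"
    and g1_inf: "\<And>x y. x \<in> \<Omega> \<Longrightarrow> y \<in> \<Omega> \<Longrightarrow> filterlim (\<lambda>t. a x y t * t) at_top at_top"
    and g2: "\<And>x y. x \<in> \<Omega> \<Longrightarrow> y \<in> \<Omega> \<Longrightarrow> continuous_on {0<..} (a x y)"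
    and g3: "\<And>x y. x \<in> \<Omega> \<Longrightarrow> y \<in> \<Omega> \<Longrightarrow> strict_mono_on {0<..} (\<lambda>t. a x y t * t)"
    and g4_const: "1 < gm" "gm \<le> gp"
    and g4: "\<And>x y t. x \<in> \<Omega> \<Longrightarrow> y \<in> \<Omega> \<Longrightarrow> 0 < t \<Longrightarrow>
          gm \<le> a x y t * t\<^sup>2 / G_of a x y t \<and> a x y t * t\<^sup>2 / G_of a x y t \<le> gp"
    and Bf: "0 < C1" "0 < C2"
      "\<And>x y. x \<in> \<Omega> \<Longrightarrow> y \<in> \<Omega> \<Longrightarrow> C1 \<le> G_of a x y 1 \<and> G_of a x y 1 \<le> C2"
    and u: "u \<in> C0_inf \<Omega>"
  shows "(\<integral>\<^sup>+ y \<in> \<Omega>. (\<integral>\<^sup>+ x \<in> \<Omega>.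
            ennreal (G_of a x y (\<bar>u x - u y\<bar> / norm (x - y) powr s) / norm (x - y) ^ DIM('a))
          \<partial>lborel) \<partial>lborel) < \<infinity>"
proof -
  let ?N = "DIM('a)"
  define S where "S = tsupp u"
  note ub = C0_basic[OF u]
  obtain M where M: "0 \<le> M" "\<And>x. \<bar>u x\<bar> \<le> M" using C0_bounded[OF u] by blast
  obtain L where L: "0 \<le> L" "\<And>x y. \<bar>u x - u y\<bar> \<le> L * norm (x - y)"
    using C0_lipschitz[OF u] by blast
  define K0 where "K0 = max 1 (max L (2*M))"
  define A where "A = C2 * K0 powr gp"
  have K01: "1 \<le> K0" unfolding K0_def by simp
  have A0: "0 \<le> A" unfolding A_def using Bf(2) by simp
  have Gb: "G_of a x y t \<le> A * t" if xy: "x \<in> \<Omega>" "y \<in> \<Omega>" and t: "0 \<le> t" "t \<le> K0" for x y t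
  proof -
    have eq: "G_of a x y = (\<lambda>t. integral {0..t} (\<lambda>t. if t = 0 then 0 else a x y t * t))"
    proof -
      have "g_of a x y = (\<lambda>t. if t = 0 then 0 else a x y t * t)" by (rule ext) (simp add: g_of_def)
      then show ?thesis by (intro ext) (simp add: G_of_def)
    qed
    show ?thesis
      unfolding A_def eq
      by (rule G_lin_bound[of "a x y" gm gp C2 K0 t])
         (use a_nonneg[OF xy] g1_0[OF xy] g2[OF xy] g4[OF xy] g4_const Bf(3)[OF xy] K01 t in
          \<open>simp_all add: eq\<close>)
  qed
  have G0: "G_of a x y 0 = 0" for x y by (simp add: G_of_def)
  define k1 where "k1 z = (if 0 < norm z \<and> norm z \<le> 1 then norm z powr (-(real ?N - 1 + s)) else 0)" for z :: 'a
  define k2 where "k2 z = (if 1 < norm z then norm z powr (-(real ?N + s)) else 0)" for z :: 'a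
  define kr where "kr z = A * L * k1 z + 2 * A * M * k2 z" for z
  define K where "K z = ennreal (kr z)" for z
  define F where "F x y = G_of a x y (\<bar>u x - u y\<bar> / norm (x - y) powr s) / norm (x - y) ^ ?N" for x y
  have k1nn: "0 \<le> k1 z" for z by (simp add: k1_def)
  have k2nn: "0 \<le> k2 z" for z by (simp add: k2_def)
  have pwr: "F x y \<le> kr (x - y)" if xy: "x \<in> \<Omega>" "y \<in> \<Omega>" "x \<noteq> y" for x y
  proof -
    define d where "d = norm (x - y)"
    define \<Delta> where "\<Delta> = \<bar>u x - u y\<bar>"
    define t where "t = \<Delta> / d powr s"
    have d0: "0 < d" using xy by (simp add: d_def)
    have ds0: "0 < d powr s" using d0 by simp
    have t0: "0 \<le> t" unfolding t_def \<Delta>_def using ds0 by simp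
    have F_eq: "F x y = G_of a x y t / d ^ ?N" by (simp add: F_def t_def \<Delta>_def d_def)
    have Ft: "F x y \<le> A * t / d ^ ?N" if "t \<le> K0"
      unfolding F_eq using Gb[OF xy(1,2) t0 that] d0 by (simp add: divide_right_mono)
    have At: "A * t / d ^ ?N = A * \<Delta> * (1 / (d powr s * d ^ ?N))"
      by (simp add: t_def)
    have dN: "d powr (s + real ?N) = d powr s * d ^ ?N" using d0 by (simp add: powr_add powr_realpow)
    show ?thesis
    proof (cases "d \<le> 1")
      case True
      have DL: "\<Delta> \<le> L * d" unfolding \<Delta>_def d_def by (rule L(2))
      have "d / d powr s = d powr (1 - s)" using d0 by (simp add: powr_diff)
      also have "\<dots> \<le> 1" using True d0 s by (intro powr_le1) auto
      finally have q1: "d / d powr s \<le> 1" .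
      have "t \<le> L * d / d powr s" unfolding t_def using DL ds0 by (simp add: divide_right_mono)
      also have "\<dots> \<le> L" using mult_left_mono[OF q1 L(1)] by simp
      finally have tK: "t \<le> K0" unfolding K0_def by simp
      have pid: "d / (d powr s * d ^ ?N) = d powr (-(real ?N - 1 + s))"
      proof -
        have "d powr (-(real ?N - 1 + s)) = d powr (1 - (s + real ?N))"
          by (simp add: algebra_simps)
        also have "\<dots> = d powr 1 / d powr (s + real ?N)" by (rule powr_diff)
        also have "\<dots> = d / (d powr s * d ^ ?N)" using d0 by (simp only: dN powr_one_gt_zero_iff powr_one)
        finally show ?thesis by simp
      qed
      have "F x y \<le> A * \<Delta> * (1 / (d powr s * d ^ ?N))" using Ft[OF tK] At by simp
      also have "\<dots> \<le> A * (L * d) * (1 / (d powr s * d ^ ?N))"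
        using DL A0 ds0 d0 by (intro mult_right_mono mult_left_mono) auto
      also have "\<dots> = A * L * (d / (d powr s * d ^ ?N))" by simp
      also have "\<dots> = A * L * k1 (x - y)"
        using True d0 unfolding pid by (simp add: k1_def d_def)
      also have "\<dots> \<le> kr (x - y)"
        unfolding kr_def using k2nn[of "x - y"] A0 M(1) by simp
      finally show ?thesis .
    next
      case False
      have DM: "\<Delta> \<le> 2 * M" unfolding \<Delta>_def using M(2)[of x] M(2)[of y] by simp
      have ds1: "1 \<le> d powr s" using False s by (intro ge_one_powr_ge_zero) auto
      have "t \<le> \<Delta>" unfolding t_def using ds1 \<Delta>_def by (simp add: divide_le_eq mult_le_cancel_left1 order_trans[OF _ mult_right_mono[OF ds1]])
      then have tK: "t \<le> K0" using DM unfolding K0_def by simp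
      have pid: "1 / (d powr s * d ^ ?N) = d powr (-(real ?N + s))"
      proof -
        have "d powr (-(real ?N + s)) = inverse (d powr (s + real ?N))"
          by (simp add: powr_minus[symmetric] add.commute)
        also have "\<dots> = 1 / (d powr s * d ^ ?N)" by (simp only: dN divide_inverse mult_1_left)
        finally show ?thesis by simp
      qed
      have "F x y \<le> A * \<Delta> * (1 / (d powr s * d ^ ?N))" using Ft[OF tK] At by simp
      also have "\<dots> \<le> A * (2 * M) * (1 / (d powr s * d ^ ?N))"
        using DM A0 ds0 d0 by (intro mult_right_mono mult_left_mono) auto
      also have "\<dots> = 2 * A * M * k2 (x - y)"
        using False d0 unfolding pid by (simp add: k2_def d_def)
      also have "\<dots> \<le> kr (x - y)"
        unfolding kr_def using k1nn[of "x - y"] A0 L(1) by simp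
      finally show ?thesis .
    qed
  qed
  have pw: "ennreal (F x y) \<le> (indicator S x + indicator S y) * K (x - y)"
    if xy: "x \<in> \<Omega>" "y \<in> \<Omega>" for x y
  proof (cases "x = y \<or> (x \<notin> S \<and> y \<notin> S)")
    case True
    then have "F x y = 0"
    proof
      assume "x = y" then show ?thesis by (simp add: F_def G0)
    next
      assume "x \<notin> S \<and> y \<notin> S"
      then have "u x = 0" "u y = 0" using ub(4) unfolding S_def by auto
      then show ?thesis by (simp add: F_def G0)
    qed
    then show ?thesis by simp
  next
    case False
    then have ne: "x \<noteq> y" and 1: "1 \<le> (indicator S x + indicator S y :: ennreal)"
      by (auto simp: indicator_def)
    have "ennreal (F x y) \<le> K (x - y)" unfolding K_def using pwr[OF xy ne] by (simp add: ennreal_leI)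
    also have "\<dots> \<le> (indicator S x + indicator S y) * K (x - y)"
      using mult_right_mono[OF 1, of "K (x - y)"] by simp
    finally show ?thesis .
  qed
  have Km: "K \<in> borel_measurable borel"
    unfolding K_def kr_def k1_def k2_def by measurable
  have Keven: "K (-z) = K z" for z by (simp add: K_def kr_def k1_def k2_def)
  have KI: "integral\<^sup>N lborel K < \<infinity>"
  proof -
    have k1m: "(\<lambda>z. ennreal (k1 z)) \<in> borel_measurable borel" unfolding k1_def by measurable
    have k2m: "(\<lambda>z. ennreal (k2 z)) \<in> borel_measurable borel" unfolding k2_def by measurable
    have AL: "0 \<le> A * L" and AM: "0 \<le> 2 * A * M" using A0 L(1) M(1) by auto
    have eqK: "K z = ennreal (A * L) * ennreal (k1 z) + ennreal (2 * A * M) * ennreal (k2 z)" for z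
    proof -
      have "K z = ennreal (A * L * k1 z) + ennreal (2 * A * M * k2 z)"
        unfolding K_def kr_def
        by (rule ennreal_plus) (use AL AM k1nn[of z] k2nn[of z] in auto)
      also have "ennreal (A * L * k1 z) = ennreal (A * L) * ennreal (k1 z)"
        by (rule ennreal_mult) (use AL k1nn[of z] in auto)
      also have "ennreal (2 * A * M * k2 z) = ennreal (2 * A * M) * ennreal (k2 z)"
        by (rule ennreal_mult) (use AM k2nn[of z] in auto)
      finally show ?thesis .
    qed
    have "integral\<^sup>N lborel K = (\<integral>\<^sup>+z. ennreal (A * L) * ennreal (k1 z) + ennreal (2 * A * M) * ennreal (k2 z) \<partial>lborel)"
      by (intro nn_integral_cong eqK)
    also have "\<dots> = (\<integral>\<^sup>+z. ennreal (A * L) * ennreal (k1 z) \<partial>lborel) + (\<integral>\<^sup>+z. ennreal (2 * A * M) * ennreal (k2 z) \<partial>lborel)"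
      by (rule nn_integral_add) (use k1m k2m in auto)
    also have "(\<integral>\<^sup>+z. ennreal (A * L) * ennreal (k1 z) \<partial>lborel) = ennreal (A * L) * (\<integral>\<^sup>+z. ennreal (k1 z) \<partial>lborel)"
      by (rule nn_integral_cmult) (use k1m in auto)
    also have "(\<integral>\<^sup>+z. ennreal (2 * A * M) * ennreal (k2 z) \<partial>lborel) = ennreal (2 * A * M) * (\<integral>\<^sup>+z. ennreal (k2 z) \<partial>lborel)"
      by (rule nn_integral_cmult) (use k2m in auto)
    also have "ennreal (A * L) * (\<integral>\<^sup>+z. ennreal (k1 z) \<partial>lborel) + ennreal (2 * A * M) * (\<integral>\<^sup>+z. ennreal (k2 z) \<partial>lborel) < \<infinity>"
    proof -
      have "(\<integral>\<^sup>+z. ennreal (k1 z) \<partial>lborel) < \<infinity>"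
        unfolding k1_def using s by (intro near_kernel_finite) auto
      moreover have "(\<integral>\<^sup>+z. ennreal (k2 z) \<partial>lborel) < \<infinity>"
        unfolding k2_def using s by (intro far_kernel_finite) auto
      ultimately show ?thesis by (simp add: ennreal_mult_less_top)
    qed
    finally show ?thesis .
  qed
  have Sb: "S \<in> sets borel" unfolding S_def using ub(2) by (simp add: compact_imp_closed borel_closed)
  have Sf: "emeasure lborel S < \<infinity>" unfolding S_def using ub(2) by (rule emeasure_compact_finite)
  have "(\<integral>\<^sup>+ y \<in> \<Omega>. (\<integral>\<^sup>+ x \<in> \<Omega>. ennreal (F x y) \<partial>lborel) \<partial>lborel)
      \<le> (\<integral>\<^sup>+y. (\<integral>\<^sup>+x. (indicator S x + indicator S y) * K (x - y) \<partial>lborel) \<partial>lborel)"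
  proof (intro nn_integral_mono)
    fix y :: 'a
    show "(\<integral>\<^sup>+ x \<in> \<Omega>. ennreal (F x y) \<partial>lborel) * indicator \<Omega> y
        \<le> (\<integral>\<^sup>+x. (indicator S x + indicator S y) * K (x - y) \<partial>lborel)"
    proof (cases "y \<in> \<Omega>")
      case True
      have "(\<integral>\<^sup>+ x \<in> \<Omega>. ennreal (F x y) \<partial>lborel) \<le> (\<integral>\<^sup>+x. (indicator S x + indicator S y) * K (x - y) \<partial>lborel)"
        by (intro nn_integral_mono) (use pw True in \<open>auto simp: indicator_def\<close>)
      then show ?thesis using True by simp
    qed simp
  qed
  also have "\<dots> < \<infinity>" by (rule double_kernel_finite[OF Km Keven KI Sb Sf])
  finally show ?thesis unfolding F_def .
qed

end
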